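(* Let $(a_n)_{n\in\mathbb{Z}}$ be the Somos-4 sequence, i.e. the unique sequence of positive rational numbers with $a_0=a_1=a_2=a_3=1$ and $$a_n\,a_{n-4}=a_{n-1}\,a_{n-3}+a_{n-2}^2\quad\text{for all } n\in\mathbb{Z}.$$ Then for all integers $s,t,u,v,w,x,y,z$, writing $(r_1,r_2,r_3,r_4)=(s,t,u,v)$ and $(c_1,c_2,c_3,c_4)=(w,x,y,z)$, the $4\times 4$ determinant $$\det\left[a_{r_i-c_j}\,a_{r_i+c_j}\right]_{1\le i,j\le 4}$$ is equal to $0$.
   Context: The sequence is extended to negative indices by the same recurrence (run backwards); all terms are positive, so it is well defined (e.g. $a_{-1}=2$, $a_4=2$, $a_5=3$, $a_6=7$, and $a_{3-n}=a_n$). The $(i,j)$ entry of the matrix is the product $a_{r_i-c_j}\,a_{r_i+c_j}$. *)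

theory Defs
  imports "Jordan_Normal_Form.Determinant"
begin

definition is_somos4 :: "(int \<Rightarrow> rat) \<Rightarrow> bool" where
  "is_somos4 a \<longleftrightarrow>
     (\<forall>n. a n > 0) \<and> a 0 = 1 \<and> a 1 = 1 \<and> a 2 = 1 \<and> a 3 = 1 \<and>
     (\<forall>n. a n * a (n - 4) = a (n - 1) * a (n - 3) + (a (n - 2))^2)"

end

theory Submission
  imports Defs
begin

lemma s_pos: "is_somos4 a \<Longrightarrow> a n > 0"
  unfolding is_somos4_def by blast

lemma s_rec: assumes "is_somos4 a"
  shows "a (n+2) * a (n-2) = a (n+1) * a (n-1) + (a n)^2"
proof -
  have "\<forall>m. a m * a (m - 4) = a (m - 1) * a (m - 3) + (a (m - 2))^2"
    using assms unfolding is_somos4_def by blast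
  from this[rule_format, of "n+2"] show ?thesis by (simp add: algebra_simps)
qed

lemma s_vals: assumes "is_somos4 a"
  shows "a 0 = 1" "a 1 = 1" "a 2 = 1" "a 3 = 1" "a (-1) = 2"
proof -
  show h: "a 0 = 1" "a 1 = 1" "a 2 = 1" "a 3 = 1" using assms unfolding is_somos4_def by auto
  have "a (1+2) * a (1-2) = a (1+1) * a (1-1) + (a 1)^2" by (rule s_rec[OF assms])
  then show "a (-1) = 2" using h by simp
qed

lemma T_step:
  fixes p0 p1 p2 p3 p4 p5 :: rat
  assumes "p1 > 0" "p2 > 0" "p3 > 0" "p4 > 0"
    and h1: "p5 * p1 = p4 * p2 + p3^2" and h2: "p4 * p0 = p3 * p1 + p2^2"
  shows "(p5*p2^2 + p4^2*p1 + p3^3)/(p4*p3*p2) = (p4*p1^2 + p3^2*p0 + p2^3)/(p3*p2*p1)"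
proof -
  have e5: "p5 = (p4 * p2 + p3^2)/p1" using h1 assms by (simp add: field_simps)
  have e0: "p0 = (p3 * p1 + p2^2)/p4" using h2 assms by (simp add: field_simps)
  show ?thesis unfolding e5 e0 using assms by (simp add: field_simps) (simp add: algebra_simps power2_eq_square power3_eq_cube)
qed

lemma s_inv: assumes "is_somos4 a"
  shows "a (n+2) * (a (n-1))^2 + (a (n+1))^2 * a (n-2) + (a n)^3 = 4 * a (n+1) * a n * a (n-1)"
proof -
  define T where "T = (\<lambda>n. (a (n+2) * (a (n-1))^2 + (a (n+1))^2 * a (n-2) + (a n)^3)
                           / (a (n+1) * a n * a (n-1)))"
  have pos: "\<And>m. a m > 0" using s_pos[OF assms] .
  have step: "T (m+1) = T m" for m
  proof -
    have h1: "a (m+3) * a (m-1) = a (m+2) * a m + (a (m+1))^2"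
      using s_rec[OF assms, of "m+1"] by (simp add: algebra_simps)
    have h2: "a (m+2) * a (m-2) = a (m+1) * a (m-1) + (a m)^2"
      using s_rec[OF assms, of m] .
    have "T (m+1) = (a (m+3) * (a m)^2 + (a (m+2))^2 * a (m-1) + (a (m+1))^3)
                           / (a (m+2) * a (m+1) * a m)"
      unfolding T_def by (simp add: algebra_simps)
    also have "\<dots> = T m" unfolding T_def
      by (rule T_step[OF pos pos pos pos h1 h2])
    finally show ?thesis .
  qed
  have "T n = T 1"
  proof (induction n rule: int_induct[where k=1])
    case base then show ?case by simp
  next
    case (step1 i) then show ?case using step[of i] by simp
  next
    case (step2 i) then show ?case using step[of "i-1"] by simp
  qed
  also have "T 1 = 4" unfolding T_def using s_vals[OF assms] by simp
  finally have "T n = 4" .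
  then show ?thesis unfolding T_def using pos[of n] pos[of "n+1"] pos[of "n-1"]
    by (simp add: field_simps)
qed


definition fk :: "(int \<Rightarrow> rat) \<Rightarrow> int \<Rightarrow> int \<Rightarrow> rat" where
  "fk a k n = a (n+k) * a (n-k)"
definition uu :: "(int \<Rightarrow> rat) \<Rightarrow> int \<Rightarrow> rat" where
  "uu a n = a (n+1) * a (n-1)"
definition ww :: "(int \<Rightarrow> rat) \<Rightarrow> int \<Rightarrow> rat" where
  "ww a n = (a n)^2"
definition cA :: "(int \<Rightarrow> rat) \<Rightarrow> int \<Rightarrow> rat" where
  "cA a k = fk a k 0 - fk a k 1"
definition cB :: "(int \<Rightarrow> rat) \<Rightarrow> int \<Rightarrow> rat" where
  "cB a k = 2 * fk a k 1 - fk a k 0"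
definition qf :: "rat \<Rightarrow> rat \<Rightarrow> rat \<Rightarrow> rat \<Rightarrow> rat" where
  "qf A B U W = B^2*U^2 + (A^2+4*A*B)*U*W + (A^2-A*B)*W^2"

lemma fk_shift: "fk a (k+1) n * fk a (k-1) n = fk a k (n+1) * fk a k (n-1)"
  unfolding fk_def by (simp add: algebra_simps)

lemma fk_q: assumes S: "is_somos4 a" and P: "\<And>n. fk a k n = A * uu a n + B * ww a n"
  shows "fk a k (n+1) * fk a k (n-1) = qf A B (uu a n) (ww a n)"
proof -
  have r: "a (n+2) * a (n-2) = a (n+1) * a (n-1) + (a n)^2" by (rule s_rec[OF S])
  have i: "a (n+2) * (a (n-1))^2 + (a (n+1))^2 * a (n-2) + (a n)^3 = 4 * a (n+1) * a n * a (n-1)"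
    by (rule s_inv[OF S])
  have uu1: "uu a (n+1) = a (n+2) * a n" unfolding uu_def by (simp add: algebra_simps)
  have uu2: "uu a (n-1) = a n * a (n-2)" unfolding uu_def by (simp add: algebra_simps)
  have e1: "uu a (n+1) * uu a (n-1) = ww a n * (uu a n + ww a n)"
    unfolding uu1 uu2 using r unfolding ww_def uu_def
    by (simp add: algebra_simps power2_eq_square)
  have e2: "ww a (n+1) * ww a (n-1) = (uu a n)^2"
    unfolding ww_def uu_def by (simp add: algebra_simps power2_eq_square)
  have e3: "uu a (n+1) * ww a (n-1) + ww a (n+1) * uu a (n-1) = 4 * uu a n * ww a n - (ww a n)^2"
  proof -
    have "uu a (n+1) * ww a (n-1) + ww a (n+1) * uu a (n-1)
        = a n * (a (n+2) * (a (n-1))^2 + (a (n+1))^2 * a (n-2))"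
      unfolding uu1 uu2 ww_def by (simp add: algebra_simps)
    also have "\<dots> = a n * (4 * a (n+1) * a n * a (n-1) - (a n)^3)"
    proof -
      have "a (n+2) * (a (n-1))^2 + (a (n+1))^2 * a (n-2) = 4 * a (n+1) * a n * a (n-1) - (a n)^3"
        using i by linarith
      then show ?thesis by simp
    qed
    finally show ?thesis unfolding uu_def ww_def by (simp add: algebra_simps power2_eq_square power3_eq_cube)
  qed
  have "fk a k (n+1) * fk a k (n-1) = (A * uu a (n+1) + B * ww a (n+1)) * (A * uu a (n-1) + B * ww a (n-1))"
    using P by simp
  also have "\<dots> = A^2 * (uu a (n+1) * uu a (n-1)) + A*B*(uu a (n+1) * ww a (n-1) + ww a (n+1) * uu a (n-1))
      + B^2 * (ww a (n+1) * ww a (n-1))" by (simp add: algebra_simps power2_eq_square)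
  also have "\<dots> = qf A B (uu a n) (ww a n)" unfolding e1 e2 e3 qf_def
    by (simp add: algebra_simps power2_eq_square)
  finally show ?thesis .
qed

lemma alg1: assumes "B^2 = A'*C" "A^2+4*A*B = A'*D + B'*C" "A^2-A*B = B'*D"
  shows "A'*(D^2*B^2 - (C^2+4*C*D)*A*B + (C^2-C*D)*A^2) = (0::rat)"
proof -
  have "A'*(D^2*B^2 - (C^2+4*C*D)*A*B + (C^2-C*D)*A^2) =
     (4*A*B*D + A*B*C + A^2*D - A^2*C)*(B^2 - A'*C) + (- (B^2*D))*(A^2+4*A*B - (A'*D + B'*C))
     + (B^2*C)*(A^2-A*B - B'*D)"
    by (simp add: algebra_simps power2_eq_square)
  then show ?thesis using assms by simp
qed
lemma alg2: assumes "B^2 = A'*C" "A^2+4*A*B = A'*D + B'*C" "A^2-A*B = B'*D"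
  shows "B'*(D^2*B^2 - (C^2+4*C*D)*A*B + (C^2-C*D)*A^2) = (0::rat)"
proof -
  have "B'*(D^2*B^2 - (C^2+4*C*D)*A*B + (C^2-C*D)*A^2) =
     (A^2*D - A*B*D)*(B^2 - A'*C) + (A*B*C - A^2*C)*(A^2+4*A*B - (A'*D + B'*C))
     + (4*A*B*C + A^2*C - B^2*D)*(A^2-A*B - B'*D)"
    by (simp add: algebra_simps power2_eq_square)
  then show ?thesis using assms by simp
qed

lemma alg_step:
  fixes A' B' A B C D :: rat
  assumes p1: "A' + B' > 0" and p2: "2*A' + B' > 0"
    and e0: "qf A B 2 1 = (2*A'+B')*(2*C+D)"
    and e1: "qf A B 1 1 = (A'+B')*(C+D)"
    and R: "qf A B B' (-A') = 0"
  shows "\<And>U W. qf A B U W = (A'*U + B'*W)*(C*U+D*W)" and "qf C D B (-A) = 0"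
proof -
  define al where "al = B^2 - A'*C"
  define be where "be = (A^2+4*A*B) - (A'*D+B'*C)"
  define ga where "ga = (A^2-A*B) - B'*D"
  have q0: "4*al + 2*be + ga = 0" using e0 unfolding al_def be_def ga_def qf_def by (simp add: algebra_simps power2_eq_square)
  have q1: "al + be + ga = 0" using e1 unfolding al_def be_def ga_def qf_def by (simp add: algebra_simps power2_eq_square)
  have q2: "al*B'^2 - be*A'*B' + ga*A'^2 = 0" using R unfolding al_def be_def ga_def qf_def by (simp add: algebra_simps power2_eq_square)
  have be': "be = -3*al" using q0 q1 by linarith
  have ga': "ga = 2*al" using q0 q1 by linarith
  have "al * ((A'+B')*(2*A'+B')) = 0" using q2 unfolding be' ga' by (simp add: algebra_simps power2_eq_square)
  then have al0: "al = 0" using p1 p2 by simp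
  then have c1: "B^2 = A'*C" and c2: "A^2+4*A*B = A'*D + B'*C" and c3: "A^2-A*B = B'*D"
    using be' ga' unfolding al_def be_def ga_def by auto
  show "\<And>U W. qf A B U W = (A'*U + B'*W)*(C*U+D*W)" unfolding qf_def
  proof -
    fix U W
    have "B\<^sup>2 * U\<^sup>2 + (A\<^sup>2 + 4 * A * B) * U * W + (A\<^sup>2 - A * B) * W\<^sup>2
       = (A'*C) * U\<^sup>2 + (A'*D + B'*C) * U * W + (B'*D) * W\<^sup>2" unfolding c1 c2 c3 ..
    also have "\<dots> = (A'*U + B'*W)*(C*U+D*W)" by (simp add: algebra_simps power2_eq_square)
    finally show "B\<^sup>2 * U\<^sup>2 + (A\<^sup>2 + 4 * A * B) * U * W + (A\<^sup>2 - A * B) * W\<^sup>2 = (A'*U + B'*W)*(C*U+D*W)" .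
  qed
  have g1: "A'*(D^2*B^2 - (C^2+4*C*D)*A*B + (C^2-C*D)*A^2) = 0"
    using c1 c2 c3 by (rule alg1)
  have g2: "B'*(D^2*B^2 - (C^2+4*C*D)*A*B + (C^2-C*D)*A^2) = 0"
    using c1 c2 c3 by (rule alg2)
  have "A' \<noteq> 0 \<or> B' \<noteq> 0" using p1 by auto
  then have "D^2*B^2 - (C^2+4*C*D)*A*B + (C^2-C*D)*A^2 = 0" using g1 g2 by auto
  then show "qf C D B (-A) = 0" unfolding qf_def by (simp add: algebra_simps power2_eq_square)
qed

lemma main_nat: assumes S: "is_somos4 a"
  shows "(\<forall>n. fk a (int m) n = cA a (int m) * uu a n + cB a (int m) * ww a n) \<and>
         (\<forall>n. fk a (int m + 1) n = cA a (int m + 1) * uu a n + cB a (int m + 1) * ww a n) \<and>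
         qf (cA a (int m + 1)) (cB a (int m + 1)) (cB a (int m)) (- cA a (int m)) = 0"
proof (induction m)
  case 0
  have v: "a 0 = 1" "a 1 = 1" "a 2 = 1" "a 3 = 1" "a (-1) = 2" using s_vals[OF S] by auto
  have c: "cA a 0 = 0" "cB a 0 = 1" "cA a 1 = 1" "cB a 1 = 0"
    unfolding cA_def cB_def fk_def using v by auto
  show ?case using c unfolding fk_def uu_def ww_def qf_def by (simp add: power2_eq_square)
next
  case (Suc m)
  define k where "k = int m"
  have sk: "int (Suc m) = k + 1" unfolding k_def by simp
  have P0: "\<And>n. fk a k n = cA a k * uu a n + cB a k * ww a n" using Suc.IH unfolding k_def by blast
  have P1: "\<And>n. fk a (k+1) n = cA a (k+1) * uu a n + cB a (k+1) * ww a n" using Suc.IH unfolding k_def by blast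
  have R: "qf (cA a (k+1)) (cB a (k+1)) (cB a k) (- cA a k) = 0" using Suc.IH unfolding k_def by blast
  have pos: "\<And>m. a m > 0" using s_pos[OF S] .
  have fpos: "\<And>j n. fk a j n > 0" unfolding fk_def using pos by simp
  have v: "a 0 = 1" "a 1 = 1" "a 2 = 1" "a (-1) = 2" using s_vals[OF S] by auto
  have uv: "uu a 0 = 2" "ww a 0 = 1" "uu a 1 = 1" "ww a 1 = 1"
    unfolding uu_def ww_def using v by auto
  have H: "fk a (k+2) n * fk a k n = qf (cA a (k+1)) (cB a (k+1)) (uu a n) (ww a n)" for n
  proof -
    have "fk a (k+2) n * fk a k n = fk a (k+1) (n+1) * fk a (k+1) (n-1)"
      using fk_shift[of a "k+1" n] by (simp add: algebra_simps)
    also have "\<dots> = qf (cA a (k+1)) (cB a (k+1)) (uu a n) (ww a n)"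
      by (rule fk_q[OF S P1])
    finally show ?thesis .
  qed
  have f0: "fk a k 0 = 2 * cA a k + cB a k" using P0[of 0] uv by simp
  have f1: "fk a k 1 = cA a k + cB a k" using P0[of 1] uv by simp
  have g0: "fk a (k+2) 0 = 2 * cA a (k+2) + cB a (k+2)" unfolding cA_def cB_def by simp
  have g1: "fk a (k+2) 1 = cA a (k+2) + cB a (k+2)" unfolding cA_def cB_def by simp
  have p1: "cA a k + cB a k > 0" using fpos[of k 1] f1 by simp
  have p2: "2 * cA a k + cB a k > 0" using fpos[of k 0] f0 by simp
  have e0: "qf (cA a (k+1)) (cB a (k+1)) 2 1 = (2 * cA a k + cB a k) * (2 * cA a (k+2) + cB a (k+2))"
    using H[of 0] f0 g0 uv by (simp add: mult.commute)
  have e1: "qf (cA a (k+1)) (cB a (k+1)) 1 1 = (cA a k + cB a k) * (cA a (k+2) + cB a (k+2))"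
    using H[of 1] f1 g1 uv by (simp add: mult.commute)
  note AS = alg_step[OF p1 p2 e0 e1 R]
  have P2: "fk a (k+2) n = cA a (k+2) * uu a n + cB a (k+2) * ww a n" for n
  proof -
    have "fk a (k+2) n * fk a k n = (cA a (k+2) * uu a n + cB a (k+2) * ww a n) * fk a k n"
    proof -
      have "fk a (k+2) n * fk a k n = qf (cA a (k+1)) (cB a (k+1)) (uu a n) (ww a n)" by (rule H)
      also have "\<dots> = (cA a k * uu a n + cB a k * ww a n) * (cA a (k+2) * uu a n + cB a (k+2) * ww a n)"
        by (rule AS(1))
      also have "\<dots> = fk a k n * (cA a (k+2) * uu a n + cB a (k+2) * ww a n)" using P0[of n] by simp
      finally show ?thesis by (simp add: mult.commute)
    qed
    then show ?thesis using fpos[of k n] by simp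
  qed
  have e: "k + 1 + 1 = k + 2" by simp
  show ?case unfolding sk e using P1 P2 AS(2) by blast
qed

lemma main_int: assumes S: "is_somos4 a"
  shows "fk a c n = cA a c * uu a n + cB a c * ww a n"
proof (cases "c \<ge> 0")
  case True
  then obtain m where "c = int m" by (metis nonneg_int_cases)
  then show ?thesis using main_nat[OF S, of m] by blast
next
  case False
  then obtain m where m: "- c = int m" by (metis neg_0_le_iff_le nonneg_int_cases le_cases)
  have sym: "\<And>n. fk a (-c) n = fk a c n" unfolding fk_def by (simp add: mult.commute)
  have "cA a (-c) = cA a c" "cB a (-c) = cB a c" unfolding cA_def cB_def sym by auto
  then show ?thesis using main_nat[OF S, of m] m sym by metis
qed

theorem corollary4:
  fixes a :: "int \<Rightarrow> rat" and s t u v w x y z :: int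
  assumes "is_somos4 a"
  shows "det (mat 4 4 (\<lambda>(i, j). let r = [s, t, u, v] ! i; c = [w, x, y, z] ! j
                                in a (r - c) * a (r + c))) = 0"
proof -
  define rs where "rs = [s, t, u, v]"
  define cs where "cs = [w, x, y, z]"
  define P where "P = mat 4 4 (\<lambda>(i, j). if j = 0 then uu a (rs ! i) else if j = 1 then ww a (rs ! i) else 0)"
  define Q where "Q = mat 4 4 (\<lambda>(i, j). if i = 0 then cA a (cs ! j) else if i = 1 then cB a (cs ! j) else 0)"
  have PQ: "mat 4 4 (\<lambda>(i, j). let r = [s, t, u, v] ! i; c = [w, x, y, z] ! j
                                in a (r - c) * a (r + c)) = P * Q"
  proof (rule eq_matI)
    fix i j assume ij: "i < dim_row (P * Q)" "j < dim_col (P * Q)"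
    then have i4: "i < 4" and j4: "j < 4" unfolding P_def Q_def by auto
    have "(P * Q) $$ (i, j) = (\<Sum>k\<in>{0..<4}. P $$ (i, k) * Q $$ (k, j))"
      using i4 j4 unfolding P_def Q_def by (simp add: scalar_prod_def)
    also have "\<dots> = uu a (rs ! i) * cA a (cs ! j) + ww a (rs ! i) * cB a (cs ! j)"
      using i4 j4 unfolding P_def Q_def by (simp add: numeral_eq_Suc)
    also have "\<dots> = fk a (cs ! j) (rs ! i)" using main_int[OF assms] by (simp add: mult.commute)
    also have "\<dots> = a (rs ! i - cs ! j) * a (rs ! i + cs ! j)" unfolding fk_def by (simp add: mult.commute)
    finally show "mat 4 4 (\<lambda>(i, j). let r = [s, t, u, v] ! i; c = [w, x, y, z] ! j
                                in a (r - c) * a (r + c)) $$ (i, j) = (P * Q) $$ (i, j)"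
      using i4 j4 unfolding rs_def cs_def by (simp add: Let_def)
  qed (auto simp: P_def Q_def)
  have Qz: "det Q = 0"
  proof -
    have "Q = mat\<^sub>r 4 4 (\<lambda>i. if i = 2 then 0\<^sub>v 4 else row Q i)"
      by (rule eq_matI) (auto simp: Q_def)
    also have "det \<dots> = 0"
      by (rule det_row_0) (auto simp: Q_def)
    finally show ?thesis .
  qed
  have "det (P * Q) = det P * det Q"
    by (rule det_mult) (auto simp: P_def Q_def)
  then show ?thesis unfolding PQ Qz by simp
qed

end
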